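(* Let $(X,d_X)$ and $(Y,d_Y)$ be separable metric spaces with $X$ zero-dimensional, and let $\xi$ be a nonzero countable ordinal. A function $f:X\to Y$ is of Baire class $\xi$ if and only if there is a sequence of functions $X\to Y$ converging uniformly to $f$ such that each of them is locally constant on some $\mathbf{\Pi}^0_\xi$-partition of $X$. The same equivalence holds with "locally constant" replaced by "locally Lipschitz", and also with "locally constant" replaced by "locally continuous".
   Context: Work in ZF plus countable choice over the reals. $f$ is of Baire class $1$ if $f^{-1}(U)\in\mathbf{\Sigma}^0_2(X)$ for every open $U\subseteq Y$; for $1<\xi<\omega_1$, $f$ is of Baire class $\xi$ if it is the pointwise limit of functions $f_n:X\to Y$ each of Baire class $\xi_n$ for some $1\le\xi_n<\xi$. A $\mathbf{\Pi}^0_\xi$-partition of $X$ is a family $\langle C_n:n<N\rangle$, $1\le N\le\omega$, of nonempty pairwise disjoint sets in $\mathbf{\Pi}^0_\xi(X)$ whose union is $X$. A function $g:X\to Y$ is locally constant (resp. Lipschitz, continuous) on such a partition if there are constant (resp. Lipschitz, continuous) functions $g_n:X\to Y$ with $g\restriction C_n=g_n\restriction C_n$ for all $n<N$. *)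

theory Defs
  imports "HOL-Analysis.Analysis" "HOL-Library.Extended_Nat"
begin

text \<open>Countable ordinals are represented by well-orders on subsets of nat
  (every countable ordinal is the order type of such a relation, and conversely).
  The ordinal is nonzero iff the field is nonempty; it is the finite ordinal k
  iff the field is finite of cardinality k.\<close>

definition separable_space :: "'a::topological_space itself \<Rightarrow> bool" where
  "separable_space _ \<longleftrightarrow> (\<exists>D::'a set. countable D \<and> closure D = UNIV)"

definition zero_dimensional :: "'a::topological_space itself \<Rightarrow> bool" where
  "zero_dimensional _ \<longleftrightarrow>
     (\<forall>(U::'a set) x. open U \<and> x \<in> U \<longrightarrow> (\<exists>V. open V \<and> closed V \<and> x \<in> V \<and> V \<subseteq> U))"

inductive Sigma0 :: "nat rel \<Rightarrow> 'a::topological_space set \<Rightarrow> bool" where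
  Sigma0_open: "Well_order r \<Longrightarrow> Field r \<noteq> {} \<Longrightarrow> open A \<Longrightarrow> Sigma0 r A"
| Sigma0_union: "Well_order r \<Longrightarrow>
     (\<forall>n::nat. \<exists>s::nat rel. (s, r) \<in> ordLess \<and> Field s \<noteq> {} \<and> Sigma0 s (- F n)) \<Longrightarrow>
     Sigma0 r (\<Union>n::nat. F n)"

definition Pi0 :: "nat rel \<Rightarrow> 'a::topological_space set \<Rightarrow> bool" where
  "Pi0 r A \<longleftrightarrow> Sigma0 r (- A)"

inductive baire_class :: "nat rel \<Rightarrow> ('a::topological_space \<Rightarrow> 'b::topological_space) \<Rightarrow> bool" where
  baire_one: "Well_order r \<Longrightarrow> finite (Field r) \<Longrightarrow> card (Field r) = 1 \<Longrightarrow>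
     (\<forall>U. open U \<longrightarrow>
        (\<exists>s::nat rel. Well_order s \<and> finite (Field s) \<and> card (Field s) = 2 \<and> Sigma0 s (f -` U))) \<Longrightarrow>
     baire_class r f"
| baire_lim: "Well_order r \<Longrightarrow>
     (\<forall>n::nat. \<exists>s::nat rel. (s, r) \<in> ordLess \<and> Field s \<noteq> {} \<and> baire_class s (g n)) \<Longrightarrow>
     (\<forall>x. (\<lambda>n. g n x) \<longlonglongrightarrow> f x) \<Longrightarrow>
     baire_class r f"

definition Pi0_partition :: "nat rel \<Rightarrow> (nat \<Rightarrow> 'a::topological_space set) \<Rightarrow> enat \<Rightarrow> bool" where
  "Pi0_partition r C N \<longleftrightarrow> 1 \<le> N
     \<and> (\<forall>n. enat n < N \<longrightarrow> C n \<noteq> {} \<and> Pi0 r (C n))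
     \<and> (\<forall>m n. enat m < N \<longrightarrow> enat n < N \<longrightarrow> m \<noteq> n \<longrightarrow> C m \<inter> C n = {})
     \<and> (\<Union>{C n |n. enat n < N}) = UNIV"

definition locally_on_partition ::
  "(('a \<Rightarrow> 'b) \<Rightarrow> bool) \<Rightarrow> (nat \<Rightarrow> 'a set) \<Rightarrow> enat \<Rightarrow> ('a \<Rightarrow> 'b) \<Rightarrow> bool" where
  "locally_on_partition P C N g \<longleftrightarrow>
     (\<exists>G. \<forall>n. enat n < N \<longrightarrow> P (G n) \<and> (\<forall>x\<in>C n. g x = G n x))"

definition constant_fun :: "('a \<Rightarrow> 'b) \<Rightarrow> bool" where
  "constant_fun h \<longleftrightarrow> (\<exists>c. h = (\<lambda>_. c))"

definition lipschitz_fun :: "('a::metric_space \<Rightarrow> 'b::metric_space) \<Rightarrow> bool" where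
  "lipschitz_fun h \<longleftrightarrow> (\<exists>L. L-lipschitz_on UNIV h)"

definition continuous_fun :: "('a::topological_space \<Rightarrow> 'b::topological_space) \<Rightarrow> bool" where
  "continuous_fun h \<longleftrightarrow> continuous_on UNIV h"

definition approx_by_local ::
  "nat rel \<Rightarrow> (('a::metric_space \<Rightarrow> 'b::metric_space) \<Rightarrow> bool) \<Rightarrow> ('a \<Rightarrow> 'b) \<Rightarrow> bool" where
  "approx_by_local r P f \<longleftrightarrow>
     (\<exists>h :: nat \<Rightarrow> 'a \<Rightarrow> 'b. uniform_limit UNIV h f sequentially \<and>
        (\<forall>n. \<exists>C N. Pi0_partition r C N \<and> locally_on_partition P C N (h n)))"

end

theory Submission imports Defs begin

notation ordLess2 (infix \<open><o\<close> 50)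
notation ordLeq3 (infix \<open>\<le>o\<close> 50)
notation ordIso2 (infix \<open>=o\<close> 50)

section \<open>Ordinals\<close>

lemma ordLeq_card:
  assumes "s \<le>o r" "finite (Field r)"
  shows "finite (Field s) \<and> card (Field s) \<le> card (Field r)"
proof -
  obtain f where e: "embed s r f" and w: "Well_order s" "Well_order r"
    using assms(1) unfolding ordLeq_def by auto
  have inj: "inj_on f (Field s)" using embed_inj_on[OF w(1) e] .
  have sub: "f ` Field s \<subseteq> Field r" using embed_Field[OF e] .
  have fin: "finite (Field s)" using finite_imageD[OF finite_subset[OF sub assms(2)] inj] .
  have "card (Field s) = card (f ` Field s)" using card_image[OF inj] by simp
  also have "\<dots> \<le> card (Field r)" using card_mono[OF assms(2) sub] .
  finally show ?thesis using fin by simp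
qed

lemma ordLess_card:
  assumes "s <o r" "finite (Field r)"
  shows "finite (Field s) \<and> card (Field s) < card (Field r)"
proof -
  obtain f where e: "embed s r f" and nb: "\<not> bij_betw f (Field s) (Field r)"
    and w: "Well_order s" "Well_order r"
    using assms(1) unfolding ordLess_def embedS_def by auto
  have inj: "inj_on f (Field s)" using embed_inj_on[OF w(1) e] .
  have sub: "f ` Field s \<subseteq> Field r" using embed_Field[OF e] .
  have ne: "f ` Field s \<noteq> Field r" using nb inj unfolding bij_betw_def by auto
  have fin: "finite (Field s)" using finite_imageD[OF finite_subset[OF sub assms(2)] inj] .
  have "card (Field s) = card (f ` Field s)" using card_image[OF inj] by simp
  also have "\<dots> < card (Field r)" using psubset_card_mono[OF assms(2)] sub ne by blast
  finally show ?thesis using fin by simp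
qed

lemma ordLeq_Field_ne: "s \<le>o r \<Longrightarrow> Field s \<noteq> {} \<Longrightarrow> Field r \<noteq> {}"
  unfolding ordLeq_def using embed_Field by fastforce

lemma ordLess_Field_ne: "s <o r \<Longrightarrow> Field s \<noteq> {} \<Longrightarrow> Field r \<noteq> {}"
  using ordLeq_Field_ne ordLess_imp_ordLeq by blast

lemma ordLeq_wo2: "s \<le>o t \<Longrightarrow> Well_order t"
  unfolding ordLeq_def by blast

lemma ordLess_wo1: "s <o t \<Longrightarrow> Well_order s"
  unfolding ordLess_def by blast

lemma ordLess_wo2: "s <o t \<Longrightarrow> Well_order t"
  unfolding ordLess_def by blast

definition minord :: "nat rel \<Rightarrow> bool" where
  "minord r \<longleftrightarrow> \<not> (\<exists>s::nat rel. s <o r \<and> Field s \<noteq> {})"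

lemma card1_minord:
  assumes "finite (Field r)" "card (Field r) = 1"
  shows "minord r"
  unfolding minord_def
proof
  assume "\<exists>s::nat rel. s <o r \<and> Field s \<noteq> {}"
  then obtain s :: "nat rel" where "s <o r" "Field s \<noteq> {}" by blast
  with ordLess_card[OF this(1) assms(1)] assms(2) show False by auto
qed

lemma minord_card1:
  assumes w: "Well_order r" and ne: "Field r \<noteq> {}" and m: "minord r"
  shows "finite (Field r) \<and> card (Field r) = 1"
proof (rule ccontr)
  assume nc: "\<not> (finite (Field r) \<and> card (Field r) = 1)"
  have "\<exists>a b. a \<in> Field r \<and> b \<in> Field r \<and> a \<noteq> b"
  proof (rule ccontr)
    assume "\<not> ?thesis"
    then obtain a where "Field r = {a}" using ne by blast
    with nc show False by simp
  qed
  then obtain a b where ab: "a \<in> Field r" "b \<in> Field r" "a \<noteq> b" by blast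
  have tot: "(a,b) \<in> r \<or> (b,a) \<in> r"
    using w ab unfolding well_order_on_def linear_order_on_def total_on_def by blast
  then obtain c d where cd: "c \<in> Field r" "d \<in> Field r" "c \<noteq> d" "(c,d) \<in> r"
    using ab by blast
  let ?s = "Restr r (underS r d)"
  have "?s <o r" using underS_Restr_ordLess[OF w ne] .
  moreover have "Refl r" using w unfolding well_order_on_def linear_order_on_def
      partial_order_on_def preorder_on_def by blast
  hence "Field ?s = underS r d"
    by (intro Refl_Field_Restr2) (auto simp: underS_def Field_def)
  moreover have "c \<in> underS r d" using cd by (auto simp: underS_def)
  ultimately show False using m unfolding minord_def by blast
qed

lemma card2_lower_minord:
  assumes "finite (Field s)" "card (Field s) = 2" "t <o s" "Field t \<noteq> {}"
  shows "minord t"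
proof -
  have f: "finite (Field t)" and c: "card (Field t) < 2" using ordLess_card[OF assms(3,1)] assms(2) by auto
  have "card (Field t) \<noteq> 0" using f assms(4) by simp
  with c have "card (Field t) = 1" by linarith
  with f show ?thesis by (rule card1_minord)
qed

lemma natLeq_on_2: "Well_order (natLeq_on 2)" "finite (Field (natLeq_on 2))" "card (Field (natLeq_on 2)) = 2"
    apply (rule natLeq_on_Well_order)
   apply (unfold Field_natLeq_on) by auto

lemma natLeq_on_1_less: "natLeq_on 1 <o natLeq_on 2" "Field (natLeq_on 1) \<noteq> {}"
proof -
  show "Field (natLeq_on 1) \<noteq> {}" unfolding Field_natLeq_on by auto
  show "natLeq_on 1 <o natLeq_on 2"
  proof (rule ccontr)
    assume "\<not> ?thesis"
    hence "natLeq_on 2 \<le>o natLeq_on 1"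
      using not_ordLess_iff_ordLeq natLeq_on_Well_order by blast
    from ordLeq_card[OF this] show False unfolding Field_natLeq_on by simp
  qed
qed

lemma max_ord:
  fixes S :: "'i \<Rightarrow> nat rel" and r :: "nat rel"
  assumes "finite I" "I \<noteq> {}" "\<forall>i\<in>I. S i <o r \<and> Field (S i) \<noteq> {}"
  shows "\<exists>t::nat rel. t <o r \<and> Field t \<noteq> {} \<and> (\<forall>i\<in>I. S i \<le>o t)"
  using assms
proof (induction I rule: finite_ne_induct)
  case (singleton x)
  then have "Well_order (S x)" unfolding ordLess_def by auto
  then have "S x \<le>o S x" by (rule ordLeq_reflexive)
  then show ?case using singleton by (intro exI[of _ "S x"]) auto
next
  case (insert x F)
  have "\<forall>i\<in>F. S i <o r \<and> Field (S i) \<noteq> {}" using insert.prems by simp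
  then obtain t :: "nat rel" where t: "t <o r" "Field t \<noteq> {}" "\<forall>i\<in>F. S i \<le>o t"
    using insert.IH by blast
  have wt: "Well_order t" "Well_order (S x)" using t insert.prems ordLess_def by auto
  show ?case
  proof (cases "S x \<le>o t")
    case True then show ?thesis using t by auto
  next
    case False
    hence "t \<le>o S x" using ordLeq_total wt by blast
    have "\<forall>i\<in>F. S i \<le>o S x" using t(3) \<open>t \<le>o S x\<close> ordLeq_transitive by blast
    moreover have "S x \<le>o S x" using wt(2) by (rule ordLeq_reflexive)
    ultimately show ?thesis using insert.prems by auto
  qed
qed

section \<open>Borel classes\<close>

lemma Sigma0_wo: "Sigma0 r A \<Longrightarrow> Well_order r \<and> Field r \<noteq> {}"
proof (induction rule: Sigma0.cases)
  case (Sigma0_union r F)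
  then obtain s :: "nat rel" where "s <o r" "Field s \<noteq> {}" by blast
  then show ?case using Sigma0_union ordLess_Field_ne by blast
qed auto

lemma Pi0_wo: "Pi0 r A \<Longrightarrow> Well_order r \<and> Field r \<noteq> {}"
  unfolding Pi0_def by (rule Sigma0_wo)

lemma Sigma0_openI: "Well_order r \<Longrightarrow> Field r \<noteq> {} \<Longrightarrow> open A \<Longrightarrow> Sigma0 r A"
  by (rule Sigma0.Sigma0_open)

lemma Pi0_closedI: "Well_order r \<Longrightarrow> Field r \<noteq> {} \<Longrightarrow> closed A \<Longrightarrow> Pi0 r A"
  unfolding Pi0_def by (rule Sigma0.Sigma0_open) (auto simp: open_Compl)

lemma Sigma0_minord_open:
  assumes "minord r" "Sigma0 r A" shows "open A"
  using assms(2)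
proof (cases rule: Sigma0.cases)
  case (Sigma0_union F)
  then show ?thesis using assms(1) unfolding minord_def by blast
qed auto

lemma Pi0_minord_closed: "minord r \<Longrightarrow> Pi0 r A \<Longrightarrow> closed A"
  unfolding Pi0_def using Sigma0_minord_open closed_open by blast

lemma open_Union_closed:
  fixes U :: "'a::metric_space set"
  assumes "open U"
  shows "\<exists>K::nat \<Rightarrow> 'a set. (\<forall>k. closed (K k)) \<and> U = (\<Union>k. K k)"
proof (cases "U = UNIV")
  case True then show ?thesis by (intro exI[of _ "\<lambda>_. UNIV"]) auto
next
  case False
  define K where "K k = {x. 1 / (real k + 1) \<le> infdist x (- U)}" for k
  have "closed (K k)" for k
    unfolding K_def by (intro closed_Collect_le continuous_intros)
  moreover have "U = (\<Union>k. K k)"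
  proof
    show "U \<subseteq> (\<Union>k. K k)"
    proof
      fix x assume "x \<in> U"
      then have "infdist x (- U) > 0"
        using False assms by (intro infdist_pos_not_in_closed) auto
      then obtain k :: nat where "inverse (real (Suc k)) < infdist x (- U)"
        using reals_Archimedean by blast
      then have "1 / (real k + 1) < infdist x (- U)" by (simp add: inverse_eq_divide add.commute)
      then show "x \<in> (\<Union>k. K k)" unfolding K_def by (auto intro: less_imp_le)
    qed
    show "(\<Union>k. K k) \<subseteq> U"
    proof
      fix x assume "x \<in> (\<Union>k. K k)"
      then obtain k where k: "1 / (real k + 1) \<le> infdist x (- U)" unfolding K_def by auto
      show "x \<in> U"
      proof (rule ccontr)
        assume "x \<notin> U"
        then have "infdist x (- U) \<le> dist x x" by (intro infdist_le) auto
        moreover have "1 / (real k + 1) > 0" by simp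
        ultimately show False using k by simp
      qed
    qed
  qed
  ultimately show ?thesis by blast
qed

lemma Sigma0_char:
  fixes A :: "'a::metric_space set"
  assumes w: "Well_order r" and nm: "\<not> minord r"
  shows "Sigma0 r A \<longleftrightarrow> (\<exists>F S. A = (\<Union>n. F n) \<and> (\<forall>n::nat. S n <o r \<and> Field (S n) \<noteq> {} \<and> Pi0 (S n) (F n)))"
proof
  assume "Sigma0 r A"
  then show "\<exists>F S. A = (\<Union>n. F n) \<and> (\<forall>n::nat. S n <o r \<and> Field (S n) \<noteq> {} \<and> Pi0 (S n) (F n))"
  proof (cases rule: Sigma0.cases)
    case Sigma0_open
    obtain s :: "nat rel" where s: "s <o r" "Field s \<noteq> {}" using nm unfolding minord_def by blast
    have ws: "Well_order s" using ordLess_wo1[OF s(1)] .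
    from open_Union_closed[OF Sigma0_open(3)] obtain K :: "nat \<Rightarrow> 'a set"
      where K: "\<forall>k. closed (K k)" "A = (\<Union>k. K k)" by (elim exE conjE)
    have "\<forall>n::nat. (\<lambda>_. s) n <o r \<and> Field ((\<lambda>_. s) n) \<noteq> {} \<and> Pi0 ((\<lambda>_. s) n) (K n)"
      using K s ws Pi0_closedI by auto
    then show ?thesis using K(2) by (intro exI[of _ K] exI[of _ "\<lambda>_::nat. s"]) simp
  next
    case (Sigma0_union F)
    from choice[OF Sigma0_union(3)] obtain S where "\<forall>n. S n <o r \<and> Field (S n) \<noteq> {} \<and> Sigma0 (S n) (- F n)"
      ..
    then show ?thesis using Sigma0_union(1) unfolding Pi0_def by (intro exI[of _ F] exI[of _ S]) simp
  qed
next
  assume "\<exists>F S. A = (\<Union>n. F n) \<and> (\<forall>n::nat. S n <o r \<and> Field (S n) \<noteq> {} \<and> Pi0 (S n) (F n))"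
  then obtain F S where FS: "A = (\<Union>n. F n)" "\<forall>n::nat. S n <o r \<and> Field (S n) \<noteq> {} \<and> Pi0 (S n) (F n)"
    by blast
  show "Sigma0 r A" unfolding FS(1)
    by (rule Sigma0.Sigma0_union[OF w]) (use FS(2) Pi0_def in blast)
qed

lemma Sigma0_mono:
  assumes "Sigma0 s A" "s \<le>o t" shows "Sigma0 t A"
  using assms(1)
proof (cases rule: Sigma0.cases)
  case Sigma0_open
  have "Field t \<noteq> {}" using ordLeq_Field_ne[OF assms(2) Sigma0_open(2)] .
  then show ?thesis using Sigma0_open(3) ordLeq_wo2[OF assms(2)] by (intro Sigma0.Sigma0_open)
next
  case (Sigma0_union F)
  have "\<forall>n. \<exists>s'. s' <o t \<and> Field s' \<noteq> {} \<and> Sigma0 s' (- F n)"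
    using Sigma0_union(3) ordLess_ordLeq_trans[OF _ assms(2)] by blast
  then show ?thesis unfolding Sigma0_union(1) by (intro Sigma0.Sigma0_union ordLeq_wo2[OF assms(2)])
qed

lemma Pi0_mono: "Pi0 s A \<Longrightarrow> s \<le>o t \<Longrightarrow> Pi0 t A"
  unfolding Pi0_def by (rule Sigma0_mono)

lemma Sigma0_Pi0_up:
  assumes a: "Sigma0 s A" "s <o t" shows "Pi0 t A"
proof -
  have "\<forall>n::nat. \<exists>s'. s' <o t \<and> Field s' \<noteq> {} \<and> Sigma0 s' (- (- A))"
    using a Sigma0_wo[OF a(1)] by auto
  then have "Sigma0 t (\<Union>n::nat. - A)"
    by (intro Sigma0.Sigma0_union ordLess_wo2[OF a(2)])
  then show "Pi0 t A" unfolding Pi0_def by simp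
qed

lemma Pi0_Sigma0_up:
  assumes a: "Pi0 s A" "s <o t" shows "Sigma0 t A"
proof -
  have "\<forall>n::nat. \<exists>s'. s' <o t \<and> Field s' \<noteq> {} \<and> Sigma0 s' (- A)"
    using a Pi0_wo[OF a(1)] unfolding Pi0_def by auto
  then have "Sigma0 t (\<Union>n::nat. A)"
    by (intro Sigma0.Sigma0_union ordLess_wo2[OF a(2)])
  then show "Sigma0 t A" by simp
qed

lemma Sigma0_fromPi:
  assumes "Well_order r" "\<forall>n::nat. S n <o r \<and> Field (S n) \<noteq> {} \<and> Pi0 (S n) (F n)"
  shows "Sigma0 r (\<Union>n. F n)"
proof (rule Sigma0.Sigma0_union[OF assms(1)], rule allI)
  fix n
  show "\<exists>s. s <o r \<and> Field s \<noteq> {} \<and> Sigma0 s (- F n)"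
    using assms(2)[rule_format, of n] unfolding Pi0_def by blast
qed

lemma UN_prod_decode: "(\<Union>m. case prod_decode m of (a, b) \<Rightarrow> G a b) = (\<Union>a b. G a b)"
proof (rule set_eqI, rule iffI)
  fix x assume "x \<in> (\<Union>m. case prod_decode m of (a, b) \<Rightarrow> G a b)"
  then obtain m where "m \<in> UNIV" and m: "x \<in> (case prod_decode m of (a, b) \<Rightarrow> G a b)" by (rule UN_E)
  obtain a b where ab: "prod_decode m = (a, b)" by (cases "prod_decode m")
  show "x \<in> (\<Union>a b. G a b)" using m ab by auto
next
  fix x assume "x \<in> (\<Union>a b. G a b)"
  then obtain a b where "x \<in> G a b" by blast
  then show "x \<in> (\<Union>m. case prod_decode m of (a, b) \<Rightarrow> G a b)"
    by (intro UN_I[of "prod_encode (a,b)"]) simp_all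
qed

lemma Sigma0_UN:
  fixes A :: "nat \<Rightarrow> 'a::metric_space set"
  assumes w: "Well_order r" "Field r \<noteq> {}" and A: "\<forall>n. Sigma0 r (A n)"
  shows "Sigma0 r (\<Union>n. A n)"
proof (cases "minord r")
  case True
  then have "open (A n)" for n using A Sigma0_minord_open by blast
  then show ?thesis using w by (intro Sigma0_openI open_UN) auto
next
  case False
  have "\<forall>n. \<exists>FS. A n = (\<Union>k. fst FS k) \<and> (\<forall>k::nat. snd FS k <o r \<and> Field (snd FS k) \<noteq> {} \<and> Pi0 (snd FS k) (fst FS k))"
  proof
    fix n
    from iffD1[OF Sigma0_char[OF w(1) False] A[rule_format, of n]] obtain F S where
      "A n = (\<Union>k. F k)" "\<forall>k::nat. S k <o r \<and> Field (S k) \<noteq> {} \<and> Pi0 (S k) (F k)"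
      by (elim exE conjE)
    then show "\<exists>FS. A n = (\<Union>k. fst FS k) \<and> (\<forall>k::nat. snd FS k <o r \<and> Field (snd FS k) \<noteq> {} \<and> Pi0 (snd FS k) (fst FS k))"
      by (intro exI[of _ "(F, S)"]) simp
  qed
  from choice[OF this] obtain FS where FS0: "\<forall>n. A n = (\<Union>k. fst (FS n) k) \<and> (\<forall>k::nat. snd (FS n) k <o r \<and> Field (snd (FS n) k) \<noteq> {} \<and> Pi0 (snd (FS n) k) (fst (FS n) k))"
    ..
  define F where "F n = fst (FS n)" for n
  define S where "S n = snd (FS n)" for n
  have FS: "\<forall>n. A n = (\<Union>k. F n k) \<and> (\<forall>k::nat. S n k <o r \<and> Field (S n k) \<noteq> {} \<and> Pi0 (S n k) (F n k))"
    using FS0 unfolding F_def S_def by blast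
  have "(\<Union>n. A n) = (\<Union>m. case prod_decode m of (a, b) \<Rightarrow> F a b)"
    unfolding UN_prod_decode using FS by auto
  moreover have "\<forall>m. (case prod_decode m of (a, b) \<Rightarrow> S a b) <o r \<and> Field (case prod_decode m of (a, b) \<Rightarrow> S a b) \<noteq> {}
     \<and> Pi0 (case prod_decode m of (a, b) \<Rightarrow> S a b) (case prod_decode m of (a, b) \<Rightarrow> F a b)"
    using FS by (auto split: prod.split)
  ultimately show ?thesis using Sigma0_fromPi[OF w(1)] by metis
qed

lemma Sigma0_Un:
  fixes A B :: "'a::metric_space set"
  assumes "Sigma0 r A" "Sigma0 r B"
  shows "Sigma0 r (A \<union> B)"
proof -
  have "A \<union> B = (\<Union>n::nat. if n = 0 then A else B)" by auto
  moreover have "Sigma0 r (\<Union>n::nat. if n = 0 then A else B)"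
    using assms Sigma0_wo by (intro Sigma0_UN) auto
  ultimately show ?thesis by simp
qed

lemma Pi0_INT:
  fixes A :: "nat \<Rightarrow> 'a::metric_space set"
  assumes w: "Well_order r" "Field r \<noteq> {}" and A: "\<forall>n. Pi0 r (A n)"
  shows "Pi0 r (\<Inter>n. A n)"
proof -
  have "Sigma0 r (\<Union>n. - A n)" using A unfolding Pi0_def by (intro Sigma0_UN[OF w]) auto
  then show ?thesis unfolding Pi0_def by (simp add: uminus_INF)
qed

lemma Pi0_Int:
  fixes A B :: "'a::metric_space set"
  assumes "Pi0 r A" "Pi0 r B"
  shows "Pi0 r (A \<inter> B)"
  using Sigma0_Un[of r "-A" "-B"] assms unfolding Pi0_def by simp

lemma Sigma0_Int:
  fixes A B :: "'a::metric_space set"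
  assumes A: "Sigma0 r A" and B: "Sigma0 r B"
  shows "Sigma0 r (A \<inter> B)"
proof -
  have w: "Well_order r" "Field r \<noteq> {}" using A Sigma0_wo by auto
  show ?thesis
  proof (cases "minord r")
    case True
    then have "open A" "open B" using A B Sigma0_minord_open by blast+
    then show ?thesis using w by (intro Sigma0_openI open_Int) auto
  next
    case False
    from iffD1[OF Sigma0_char[OF w(1) False] A] obtain F S where F: "A = (\<Union>n. F n)" "\<forall>n::nat. S n <o r \<and> Field (S n) \<noteq> {} \<and> Pi0 (S n) (F n)"
      by (elim exE conjE)
    from iffD1[OF Sigma0_char[OF w(1) False] B] obtain G T where G: "B = (\<Union>n. G n)" "\<forall>n::nat. T n <o r \<and> Field (T n) \<noteq> {} \<and> Pi0 (T n) (G n)"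
      by (elim exE conjE)
    define M where "M a b = (if S a \<le>o T b then T b else S a)" for a b
    have M: "M a b <o r \<and> Field (M a b) \<noteq> {} \<and> S a \<le>o M a b \<and> T b \<le>o M a b" for a b
    proof -
      have ws: "Well_order (S a)" "Well_order (T b)" using F G ordLess_def by auto
      show ?thesis
        using F(2) G(2) ordLeq_total[OF ws] ordLeq_reflexive[OF ws(1)] ordLeq_reflexive[OF ws(2)]
        unfolding M_def by auto
    qed
    have "A \<inter> B = (\<Union>m. case prod_decode m of (a, b) \<Rightarrow> F a \<inter> G b)"
      unfolding UN_prod_decode F G by auto
    moreover have "\<forall>m. (case prod_decode m of (a, b) \<Rightarrow> M a b) <o r \<and> Field (case prod_decode m of (a, b) \<Rightarrow> M a b) \<noteq> {}
       \<and> Pi0 (case prod_decode m of (a, b) \<Rightarrow> M a b) (case prod_decode m of (a, b) \<Rightarrow> F a \<inter> G b)"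
    proof
      fix m
      obtain a b where ab: "prod_decode m = (a, b)" by (cases "prod_decode m")
      have "Pi0 (M a b) (F a)" using Pi0_mono[of "S a" "F a" "M a b"] M[of a b] F(2) by blast
      moreover have "Pi0 (M a b) (G b)" using Pi0_mono[of "T b" "G b" "M a b"] M[of a b] G(2) by blast
      ultimately have "Pi0 (M a b) (F a \<inter> G b)" by (rule Pi0_Int)
      then show "(case prod_decode m of (a, b) \<Rightarrow> M a b) <o r \<and> Field (case prod_decode m of (a, b) \<Rightarrow> M a b) \<noteq> {}
       \<and> Pi0 (case prod_decode m of (a, b) \<Rightarrow> M a b) (case prod_decode m of (a, b) \<Rightarrow> F a \<inter> G b)"
        using M[of a b] ab by simp
    qed
    ultimately show ?thesis using Sigma0_fromPi[OF w(1)] by metis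
  qed
qed

lemma Sigma0_INT_finite:
  fixes A :: "'i \<Rightarrow> 'a::metric_space set"
  assumes "finite I" "Well_order r" "Field r \<noteq> {}" "\<forall>i\<in>I. Sigma0 r (A i)"
  shows "Sigma0 r (\<Inter>i\<in>I. A i)"
  using assms by (induction I rule: finite_induct) (auto intro: Sigma0_openI Sigma0_Int)

lemma Pi0_INT_finite:
  fixes A :: "'i \<Rightarrow> 'a::metric_space set"
  assumes "finite I" "Well_order r" "Field r \<noteq> {}" "\<forall>i\<in>I. Pi0 r (A i)"
  shows "Pi0 r (\<Inter>i\<in>I. A i)"
  using assms by (induction I rule: finite_induct) (auto intro: Pi0_closedI Pi0_Int)


section \<open>Partitions\<close>

definition part :: "nat rel \<Rightarrow> (nat \<Rightarrow> 'a::topological_space set) \<Rightarrow> bool" where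
  "part r Q \<longleftrightarrow> disjoint_family Q \<and> (\<forall>n. Pi0 r (Q n)) \<and> (\<Union>n. Q n) = UNIV"

lemma open_clopen_decomp:
  fixes U :: "'a::metric_space set"
  assumes sep: "separable_space TYPE('a)" and zd: "zero_dimensional TYPE('a)" and U: "open U"
  shows "\<exists>V::nat \<Rightarrow> 'a set. disjoint_family V \<and> (\<forall>n. open (V n) \<and> closed (V n)) \<and> U = (\<Union>n. V n)"
proof -
  obtain D :: "'a set" where D: "countable D" "closure D = UNIV"
    using sep unfolding separable_space_def by blast
  define B where "B = {(d, e). d \<in> D \<and> e \<in> \<rat> \<and> e > 0 \<and> (\<exists>V. open V \<and> closed V \<and> ball d e \<subseteq> V \<and> V \<subseteq> U)}"
  define Vof where "Vof p = (SOME V. open V \<and> closed V \<and> ball (fst p) (snd p) \<subseteq> V \<and> V \<subseteq> U)" for p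
  have Vof: "open (Vof p) \<and> closed (Vof p) \<and> ball (fst p) (snd p) \<subseteq> Vof p \<and> Vof p \<subseteq> U" if "p \<in> B" for p
  proof -
    obtain d e where p: "p = (d, e)" by (cases p)
    have "\<exists>V. open V \<and> closed V \<and> ball d e \<subseteq> V \<and> V \<subseteq> U" using that unfolding B_def p by auto
    then show ?thesis unfolding Vof_def p fst_conv snd_conv by (rule someI_ex)
  qed
  have cB: "countable B"
  proof (rule countable_subset)
    show "B \<subseteq> D \<times> \<rat>" unfolding B_def by auto
    show "countable (D \<times> \<rat>)" using countable_SIGMA[OF D(1), of "\<lambda>_. \<rat>"] countable_rat by blast
  qed
  have cover: "U = (\<Union>p\<in>B. Vof p)"
  proof
    show "(\<Union>p\<in>B. Vof p) \<subseteq> U" using Vof by blast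
    show "U \<subseteq> (\<Union>p\<in>B. Vof p)"
    proof
      fix x assume "x \<in> U"
      then obtain V where V: "open V" "closed V" "x \<in> V" "V \<subseteq> U"
        using zd U unfolding zero_dimensional_def by blast
      obtain \<epsilon> where \<epsilon>: "\<epsilon> > 0" "ball x \<epsilon> \<subseteq> V" using V(1,3) open_contains_ball by blast
      have "x \<in> closure D" using D(2) by simp
      moreover have "\<epsilon> / 3 > 0" using \<epsilon>(1) by simp
      ultimately obtain d where d: "d \<in> D" "dist d x < \<epsilon> / 3" using closure_approachable[of x D] by blast
      obtain e where e: "e \<in> \<rat>" "\<epsilon> / 3 < e" "e < 2 * \<epsilon> / 3" using Rats_dense_in_real[of "\<epsilon> / 3" "2 * \<epsilon> / 3"] \<epsilon>(1) by auto
      have sub: "ball d e \<subseteq> ball x \<epsilon>"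
      proof
        fix y assume "y \<in> ball d e"
        then have "dist d y < e" by simp
        moreover have "dist x y \<le> dist x d + dist d y" by (rule dist_triangle)
        ultimately show "y \<in> ball x \<epsilon>" using d(2) e by (simp add: dist_commute)
      qed
      have "(d, e) \<in> B" unfolding B_def using d(1) e \<epsilon> sub V by auto
      moreover have "x \<in> ball d e" using d(2) e by (simp add: dist_commute)
      ultimately show "x \<in> (\<Union>p\<in>B. Vof p)" using Vof[of "(d,e)"] by auto
    qed
  qed
  show ?thesis
  proof (cases "B = {}")
    case True
    then show ?thesis using cover by (intro exI[of _ "\<lambda>_. {}"]) (auto simp: disjoint_family_on_def)
  next
    case False
    define W where "W = from_nat_into (Vof ` B)"
    have rW: "range W = Vof ` B" unfolding W_def using False cB by (simp add: range_from_nat_into)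
    have Wc: "open (W n) \<and> closed (W n)" for n
    proof -
      have "W n \<in> Vof ` B" using rW by blast
      then show ?thesis using Vof by auto
    qed
    have "(\<Union>n. W n) = U" by (simp add: rW cover)
    then have UU: "U = (\<Union>n. disjointed W n)" by (simp add: UN_disjointed_eq)
    have "open (disjointed W n) \<and> closed (disjointed W n)" for n
    proof -
      have c: "closed (\<Union>i\<in>{0..<n}. W i)" by (rule closed_UN) (auto simp: Wc)
      have o: "open (\<Union>i\<in>{0..<n}. W i)" by (rule open_UN) (simp add: Wc)
      show ?thesis unfolding disjointed_def using Wc[of n] c o by (simp add: open_Diff closed_Diff)
    qed
    then show ?thesis using UU disjoint_family_disjointed by blast
  qed
qed

lemma Sigma0_disjoint_Pi0:
  fixes A :: "'a::metric_space set"
  assumes sep: "separable_space TYPE('a)" and zd: "zero_dimensional TYPE('a)" and A: "Sigma0 r A"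
  shows "\<exists>W::nat \<Rightarrow> 'a set. disjoint_family W \<and> (\<forall>n. Pi0 r (W n)) \<and> A = (\<Union>n. W n)"
proof -
  have w: "Well_order r" "Field r \<noteq> {}" using Sigma0_wo[OF A] by auto
  show ?thesis
  proof (cases "minord r")
    case True
    then have "open A" using A Sigma0_minord_open by blast
    then obtain V :: "nat \<Rightarrow> 'a set" where V: "disjoint_family V" "\<forall>n. open (V n) \<and> closed (V n)" "A = (\<Union>n. V n)"
      using open_clopen_decomp[OF sep zd] by blast
    then show ?thesis using Pi0_closedI[OF w] by blast
  next
    case False
    from iffD1[OF Sigma0_char[OF w(1) False] A] obtain F S where F: "A = (\<Union>n. F n)" "\<forall>n::nat. S n <o r \<and> Field (S n) \<noteq> {} \<and> Pi0 (S n) (F n)"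
      by (elim exE conjE)
    have "Pi0 r (disjointed F n)" for n
    proof -
      have eq: "disjointed F n = F n \<inter> (\<Inter>i\<in>{0..<n}. - F i)" by (auto simp: disjointed_def)
      have "Pi0 r (F n)" using F(2) Pi0_mono ordLess_imp_ordLeq by blast
      moreover have "Pi0 r (\<Inter>i\<in>{0..<n}. - F i)"
      proof (rule Pi0_INT_finite[OF _ w])
        show "\<forall>i\<in>{0..<n}. Pi0 r (- F i)"
          using F(2) Sigma0_Pi0_up unfolding Pi0_def by blast
      qed simp
      ultimately show ?thesis unfolding eq by (rule Pi0_Int)
    qed
    moreover have "A = (\<Union>n. disjointed F n)" using F(1) by (simp add: UN_disjointed_eq)
    ultimately show ?thesis using disjoint_family_disjointed by blast
  qed
qed

lemma part_pairs:
  fixes R :: "nat \<times> nat \<Rightarrow> 'a::topological_space set"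
  assumes "\<forall>p q. p \<noteq> q \<longrightarrow> R p \<inter> R q = {}" "\<forall>p. Pi0 r (R p)" "(\<Union>p. R p) = UNIV"
  shows "part r (\<lambda>n. R (prod_decode n))"
  unfolding part_def
proof (intro conjI)
  show "disjoint_family (\<lambda>n. R (prod_decode n))"
    unfolding disjoint_family_on_def using assms(1) inj_prod_decode[of UNIV]
    by (metis inj_def)
  show "\<forall>n. Pi0 r (R (prod_decode n))" using assms(2) by blast
  show "(\<Union>n. R (prod_decode n)) = UNIV"
  proof -
    have "x \<in> (\<Union>n. R (prod_decode n))" for x
    proof -
      have "x \<in> (\<Union>p. R p)" using assms(3) by simp
      then obtain p where "x \<in> R p" by blast
      then show ?thesis by (intro UN_I[of "prod_encode p"]) simp_all
    qed
    then show ?thesis by blast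
  qed
qed

lemma refine:
  fixes Z :: "'i \<Rightarrow> 'a::metric_space set"
  assumes sep: "separable_space TYPE('a)" and zd: "zero_dimensional TYPE('a)"
    and fin: "finite I" and w: "Well_order t" "Field t \<noteq> {}" and Z: "\<forall>i\<in>I. Sigma0 t (Z i)"
  shows "\<exists>Q. part t Q \<and> (\<forall>k. \<forall>i\<in>I. Q k \<subseteq> Z i \<or> Q k \<inter> Z i = {})"
  using fin Z
proof (induction I rule: finite_induct)
  case empty
  define Q :: "nat \<Rightarrow> 'a set" where "Q k = (if k = 0 then UNIV else {})" for k
  have "part t Q" unfolding part_def
  proof (intro conjI)
    show "disjoint_family Q" unfolding disjoint_family_on_def Q_def by auto
    show "\<forall>n. Pi0 t (Q n)" unfolding Q_def using Pi0_closedI[OF w] by auto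
    show "(\<Union>n. Q n) = UNIV" unfolding Q_def by (auto intro: UN_I[of 0])
  qed
  then show ?case by blast
next
  case (insert i0 I)
  have "\<forall>i\<in>I. Sigma0 t (Z i)" using insert.prems by simp
  from insert.IH[OF this] obtain Q where Q: "part t Q" "\<forall>k. \<forall>i\<in>I. Q k \<subseteq> Z i \<or> Q k \<inter> Z i = {}"
    by (elim exE conjE)
  obtain W :: "nat \<Rightarrow> 'a set" where W: "disjoint_family W" "\<forall>n. Pi0 t (W n)" "Z i0 = (\<Union>n. W n)"
    using Sigma0_disjoint_Pi0[OF sep zd] insert.prems by blast
  define R where "R p = (if snd p = 0 then Q (fst p) \<inter> - Z i0 else Q (fst p) \<inter> W (snd p - 1))" for p
  have Qd: "disjoint_family Q" and QP: "\<forall>n. Pi0 t (Q n)" and QU: "(\<Union>n. Q n) = UNIV"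
    using Q(1) unfolding part_def by auto
  have R1: "\<forall>p q. p \<noteq> q \<longrightarrow> R p \<inter> R q = {}"
  proof (intro allI impI)
    fix p q :: "nat \<times> nat" assume pq: "p \<noteq> q"
    show "R p \<inter> R q = {}"
    proof (cases "fst p = fst q")
      case False
      have "R p \<subseteq> Q (fst p)" "R q \<subseteq> Q (fst q)" unfolding R_def by auto
      then show ?thesis using Qd False unfolding disjoint_family_on_def by blast
    next
      case True
      then have sn: "snd p \<noteq> snd q" using pq by (cases p, cases q) auto
      show ?thesis
      proof (cases "snd p = 0 \<or> snd q = 0")
        case True
        then show ?thesis using sn W(3) unfolding R_def by auto
      next
        case False
        then have "snd p - 1 \<noteq> snd q - 1" using sn by auto
        then have "W (snd p - 1) \<inter> W (snd q - 1) = {}" using W(1) unfolding disjoint_family_on_def by blast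
        then show ?thesis using False unfolding R_def by auto
      qed
    qed
  qed
  have R2: "\<forall>p. Pi0 t (R p)"
  proof
    fix p
    have "Pi0 t (- Z i0)" using insert.prems unfolding Pi0_def by simp
    then show "Pi0 t (R p)" unfolding R_def using QP W(2) by (auto intro: Pi0_Int)
  qed
  have R3: "(\<Union>p. R p) = UNIV"
  proof -
    have "x \<in> (\<Union>p. R p)" for x
    proof -
      obtain k where k: "x \<in> Q k" using QU by blast
      show ?thesis
      proof (cases "x \<in> Z i0")
        case True
        then obtain l where "x \<in> W l" using W(3) by blast
        then have "x \<in> R (k, Suc l)" unfolding R_def using k by simp
        then show ?thesis by blast
      next
        case False
        then have "x \<in> R (k, 0)" unfolding R_def using k by simp
        then show ?thesis by blast
      qed
    qed
    then show ?thesis by blast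
  qed
  have R4: "\<forall>p. \<forall>i\<in>insert i0 I. R p \<subseteq> Z i \<or> R p \<inter> Z i = {}"
  proof (intro allI ballI)
    fix p i assume i: "i \<in> insert i0 I"
    show "R p \<subseteq> Z i \<or> R p \<inter> Z i = {}"
    proof (cases "i = i0")
      case True
      then show ?thesis unfolding R_def using W(3) by auto
    next
      case False
      then have "i \<in> I" using i by simp
      moreover have "R p \<subseteq> Q (fst p)" unfolding R_def by auto
      ultimately show ?thesis using Q(2) by blast
    qed
  qed
  show ?case
    using part_pairs[OF R1 R2 R3] R4 by blast
qed

lemma part_to_partition:
  fixes Q :: "nat \<Rightarrow> 'a::topological_space set"
  assumes Q: "part r Q" and P: "\<forall>n. P (G n)" and h: "\<forall>n. \<forall>x\<in>Q n. h x = G n x"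
  shows "\<exists>C N. Pi0_partition r C N \<and> locally_on_partition P C N h"
proof -
  have Qd: "disjoint_family Q" and QP: "\<forall>n. Pi0 r (Q n)" and QU: "(\<Union>n. Q n) = UNIV"
    using Q unfolding part_def by auto
  define I where "I = {n. Q n \<noteq> {}}"
  have "I \<noteq> {}" using QU unfolding I_def by (metis (mono_tags, lifting) UNIV_I UN_E empty_Collect_eq empty_iff)
  have "\<exists>e N. bij_betw e {k. enat k < N} I \<and> 1 \<le> N"
  proof (cases "finite I")
    case True
    obtain e where e: "bij_betw e {0..<card I} I" using ex_bij_betw_nat_finite[OF True] by blast
    have "{k. enat k < enat (card I)} = {0..<card I}" by auto
    moreover have "card I > 0" using True \<open>I \<noteq> {}\<close> by (simp add: card_gt_0_iff)
    then have "1 \<le> enat (card I)" by (simp add: one_enat_def)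
    ultimately show ?thesis using e by metis
  next
    case False
    have "bij_betw (enumerate I) UNIV I" using bij_enumerate[OF False] .
    moreover have "{k. enat k < \<infinity>} = UNIV" by auto
    ultimately show ?thesis by (metis enat_ord_code(3) order_refl)
  qed
  then obtain e N where e: "bij_betw e {k. enat k < N} I" and N: "1 \<le> N" by blast
  define C where "C k = Q (e k)" for k
  define G' where "G' k = G (e k)" for k
  have eI: "enat k < N \<Longrightarrow> e k \<in> I" for k using e unfolding bij_betw_def by auto
  have part: "Pi0_partition r C N" unfolding Pi0_partition_def
  proof (intro conjI allI impI)
    show "1 \<le> N" by (rule N)
    fix n assume "enat n < N"
    then show "C n \<noteq> {}" "Pi0 r (C n)" using eI QP unfolding C_def I_def by auto
  next
    fix m n assume mn: "enat m < N" "enat n < N" "m \<noteq> n"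
    then have "e m \<noteq> e n" using e unfolding bij_betw_def inj_on_def by auto
    then show "C m \<inter> C n = {}" using Qd unfolding C_def disjoint_family_on_def by auto
  next
    show "\<Union> {C n |n. enat n < N} = UNIV"
    proof -
      have "x \<in> \<Union> {C n |n. enat n < N}" for x
      proof -
        obtain j where j: "x \<in> Q j" using QU by blast
        then have "j \<in> I" unfolding I_def by auto
        then obtain n where "enat n < N" "e n = j" using e unfolding bij_betw_def by auto
        then show ?thesis using j unfolding C_def by auto
      qed
      then show ?thesis by blast
    qed
  qed
  have "locally_on_partition P C N h" unfolding locally_on_partition_def
    by (intro exI[of _ G']) (use P h in \<open>auto simp: C_def G'_def\<close>)
  then show ?thesis using part by blast
qed


section \<open>Measurability\<close>

definition Sig1 :: "nat rel \<Rightarrow> 'a::topological_space set \<Rightarrow> bool" where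
  "Sig1 r A \<longleftrightarrow> (\<exists>F::nat \<Rightarrow> 'a set. A = (\<Union>n. F n) \<and> (\<forall>n. Pi0 r (F n)))"

definition meas :: "nat rel \<Rightarrow> ('a::topological_space \<Rightarrow> 'b::topological_space) \<Rightarrow> bool" where
  "meas r f \<longleftrightarrow> (\<forall>U. open U \<longrightarrow> Sig1 r (f -` U))"

lemma Sig1_Pi0: "Pi0 r A \<Longrightarrow> Sig1 r A"
  unfolding Sig1_def by (intro exI[of _ "\<lambda>_. A"]) simp

lemma Sig1_UN:
  fixes A :: "nat \<Rightarrow> 'a::topological_space set"
  assumes "\<forall>n::nat. Sig1 r (A n)"
  shows "Sig1 r (\<Union>n. A n)"
proof -
  have "\<forall>n. \<exists>F::nat \<Rightarrow> 'a set. A n = (\<Union>k. F k) \<and> (\<forall>k. Pi0 r (F k))" using assms unfolding Sig1_def by blast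
  from choice[OF this] obtain F :: "nat \<Rightarrow> nat \<Rightarrow> 'a set" where F: "\<forall>n. A n = (\<Union>k. F n k) \<and> (\<forall>k. Pi0 r (F n k))" ..
  have "(\<Union>n. A n) = (\<Union>m. case prod_decode m of (a, b) \<Rightarrow> F a b)" unfolding UN_prod_decode using F by simp
  moreover have "\<forall>m. Pi0 r (case prod_decode m of (a, b) \<Rightarrow> F a b)" using F by (simp split: prod.split)
  ultimately show ?thesis unfolding Sig1_def
    by (intro exI[of _ "\<lambda>m. case prod_decode m of (a, b) \<Rightarrow> F a b"] conjI)
qed

lemma part_const_meas:
  assumes Q: "part t Q" and g: "\<forall>j. \<forall>x\<in>Q j. g x = c j"
  shows "meas t g"
  unfolding meas_def
proof (intro allI impI)
  fix U :: "'b set" assume "open U"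
  have Qd: "disjoint_family Q" and QP: "\<forall>n. Pi0 t (Q n)" and QU: "(\<Union>n. Q n) = UNIV"
    using Q unfolding part_def by auto
  have w: "Well_order t" "Field t \<noteq> {}" using Pi0_wo QP by blast+
  have "g -` U = (\<Union>j. if c j \<in> U then Q j else {})"
  proof (rule set_eqI, rule iffI)
    fix x assume x: "x \<in> g -` U"
    obtain j where j: "x \<in> Q j" using QU by blast
    then show "x \<in> (\<Union>j. if c j \<in> U then Q j else {})" using x g by (intro UN_I[of j]) auto
  next
    fix x assume "x \<in> (\<Union>j. if c j \<in> U then Q j else {})"
    then obtain j where "x \<in> (if c j \<in> U then Q j else {})" by blast
    then show "x \<in> g -` U" using g by (auto split: if_splits)
  qed
  moreover have "Pi0 t (if c j \<in> U then Q j else {})" for j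
    using QP Pi0_closedI[OF w] by auto
  ultimately show "Sig1 t (g -` U)" unfolding Sig1_def
    by (intro exI[of _ "\<lambda>j. if c j \<in> U then Q j else {}"]) auto
qed

lemma partition_cont_meas:
  fixes h :: "'a::metric_space \<Rightarrow> 'b::topological_space"
  assumes C: "Pi0_partition r C N" and h: "locally_on_partition continuous_fun C N h"
  shows "meas r h"
  unfolding meas_def
proof (intro allI impI)
  fix U :: "'b set" assume U: "open U"
  obtain G where G: "\<forall>n. enat n < N \<longrightarrow> continuous_fun (G n) \<and> (\<forall>x\<in>C n. h x = G n x)"
    using h unfolding locally_on_partition_def by blast
  have N: "1 \<le> N" and CP: "\<forall>n. enat n < N \<longrightarrow> C n \<noteq> {} \<and> Pi0 r (C n)"
    and CU: "(\<Union>{C n |n. enat n < N}) = UNIV" using C unfolding Pi0_partition_def by auto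
  have "enat 0 < N" using N by (cases N) (auto simp: one_enat_def)
  then have w: "Well_order r" "Field r \<noteq> {}" using CP Pi0_wo by blast+
  have "\<forall>n. \<exists>K::nat \<Rightarrow> 'a set. enat n < N \<longrightarrow> (\<forall>k. closed (K k)) \<and> G n -` U = (\<Union>k. K k)"
  proof
    fix n
    show "\<exists>K::nat \<Rightarrow> 'a set. enat n < N \<longrightarrow> (\<forall>k. closed (K k)) \<and> G n -` U = (\<Union>k. K k)"
    proof (cases "enat n < N")
      case True
      then have "continuous_on UNIV (G n)" using G unfolding continuous_fun_def by blast
      then have "open (G n -` U)" using U continuous_on_open_vimage[of UNIV "G n"] by auto
      from open_Union_closed[OF this] obtain K :: "nat \<Rightarrow> 'a set"
        where K: "\<forall>k. closed (K k)" "G n -` U = (\<Union>k. K k)" by (elim exE conjE)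
      then show ?thesis by (intro exI[of _ K] impI conjI)
    qed simp
  qed
  from choice[OF this] obtain K :: "nat \<Rightarrow> nat \<Rightarrow> 'a set" where K: "\<forall>n. enat n < N \<longrightarrow> (\<forall>k. closed (K n k)) \<and> G n -` U = (\<Union>k. K n k)" ..
  define R where "R n k = (if enat n < N then C n \<inter> K n k else {})" for n k
  have "h -` U = (\<Union>n k. R n k)"
  proof (rule set_eqI, rule iffI)
    fix x assume x: "x \<in> h -` U"
    obtain n where n: "enat n < N" "x \<in> C n" using CU by blast
    then have "x \<in> G n -` U" using x G by auto
    then obtain k where "x \<in> K n k" using K n(1) by blast
    then have "x \<in> R n k" unfolding R_def using n by simp
    then show "x \<in> (\<Union>n k. R n k)" by blast
  next
    fix x assume "x \<in> (\<Union>n k. R n k)"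
    then obtain n k where "x \<in> R n k" by blast
    then have n: "enat n < N" "x \<in> C n" "x \<in> K n k" unfolding R_def by (auto split: if_splits)
    then have "x \<in> G n -` U" using K by blast
    then show "x \<in> h -` U" using n G by auto
  qed
  moreover have "Sig1 r (R n k)" for n k
  proof (cases "enat n < N")
    case True
    then have "Pi0 r (C n)" "closed (K n k)" using CP K by auto
    then have "Pi0 r (C n \<inter> K n k)" using Pi0_closedI[OF w] Pi0_Int by blast
    then show ?thesis unfolding R_def using True by (simp add: Sig1_Pi0)
  next
    case False
    then show ?thesis unfolding R_def using Sig1_Pi0[OF Pi0_closedI[OF w closed_empty]] by simp
  qed
  ultimately show "Sig1 r (h -` U)" by (simp add: Sig1_UN)
qed

lemma meas_uniform_limit:
  fixes f :: "'a::topological_space \<Rightarrow> 'b::metric_space"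
  assumes hm: "\<forall>n. meas r (h n)" and ul: "uniform_limit UNIV h f sequentially"
    and w: "Well_order r" "Field r \<noteq> {}"
  shows "meas r f"
  unfolding meas_def
proof (intro allI impI)
  fix U :: "'b set" assume U: "open U"
  show "Sig1 r (f -` U)"
  proof (cases "U = UNIV")
    case True
    then show ?thesis using Sig1_Pi0[OF Pi0_closedI[OF w closed_UNIV]] by simp
  next
    case False
    define e where "e k = 1 / (real k + 1)" for k :: nat
    have epos: "e k > 0" for k unfolding e_def by simp
    have "\<exists>n. \<forall>x. dist (h n x) (f x) < e k" for k
    proof -
      have "\<forall>\<^sub>F n in sequentially. \<forall>x\<in>UNIV. dist (h n x) (f x) < e k"
        using uniform_limitD[OF ul epos] .
      then show ?thesis unfolding eventually_sequentially by blast
    qed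
    then obtain nk where nk: "\<forall>k x. dist (h (nk k) x) (f x) < e k" by metis
    define V where "V k = {y. e k < infdist y (- U)}" for k
    have Vo: "open (V k)" for k unfolding V_def by (intro open_Collect_less continuous_intros)
    have "f -` U = (\<Union>k. h (nk k) -` V k)"
    proof (rule set_eqI, rule iffI)
      fix x assume x: "x \<in> f -` U"
      then have "infdist (f x) (- U) > 0"
        using False U by (intro infdist_pos_not_in_closed) auto
      then obtain k :: nat where "inverse (real (Suc k)) < infdist (f x) (- U) / 2"
        using reals_Archimedean[of "infdist (f x) (- U) / 2"] by auto
      then have k: "2 * e k < infdist (f x) (- U)" unfolding e_def by (simp add: inverse_eq_divide add.commute)
      have "infdist (f x) (- U) \<le> infdist (h (nk k) x) (- U) + dist (f x) (h (nk k) x)"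
        by (rule infdist_triangle)
      moreover have "dist (f x) (h (nk k) x) < e k" using nk by (simp add: dist_commute)
      ultimately have "h (nk k) x \<in> V k" unfolding V_def using k by simp
      then show "x \<in> (\<Union>k. h (nk k) -` V k)" by blast
    next
      fix x assume "x \<in> (\<Union>k. h (nk k) -` V k)"
      then obtain k where k: "e k < infdist (h (nk k) x) (- U)" unfolding V_def by blast
      show "x \<in> f -` U"
      proof (rule ccontr)
        assume "x \<notin> f -` U"
        then have "infdist (h (nk k) x) (- U) \<le> dist (h (nk k) x) (f x)" by (intro infdist_le) auto
        then show False using k nk by (metis less_le_not_le order.strict_trans)
      qed
    qed
    moreover have "Sig1 r (h (nk k) -` V k)" for k using hm Vo unfolding meas_def by blast
    ultimately show ?thesis by (simp add: Sig1_UN)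
  qed
qed

lemma meas_pointwise_limit:
  fixes f :: "'a::metric_space \<Rightarrow> 'b::metric_space"
  assumes gm: "\<forall>n. S n <o r \<and> Field (S n) \<noteq> {} \<and> meas (S n) (g n)"
    and lim: "\<forall>x. (\<lambda>n. g n x) \<longlonglongrightarrow> f x"
  shows "meas r f"
  unfolding meas_def
proof (intro allI impI)
  fix U :: "'b set" assume U: "open U"
  have w: "Well_order r" "Field r \<noteq> {}" using gm ordLess_wo2 ordLess_Field_ne by blast+
  show "Sig1 r (f -` U)"
  proof (cases "U = UNIV")
    case True
    then show ?thesis using Sig1_Pi0[OF Pi0_closedI[OF w closed_UNIV]] by simp
  next
    case False
    define e where "e k = 1 / (real k + 1)" for k :: nat
    have epos: "e k > 0" for k unfolding e_def by simp
    define FK where "FK k = {y. e k \<le> infdist y (- U)}" for k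
    have FKc: "closed (FK k)" for k unfolding FK_def by (intro closed_Collect_le continuous_intros)
    have FKU: "FK k \<subseteq> U" for k
    proof
      fix y assume y: "y \<in> FK k"
      show "y \<in> U"
      proof (rule ccontr)
        assume "y \<notin> U"
        then have "infdist y (- U) \<le> dist y y" by (intro infdist_le) auto
        then show False using y epos[of k] unfolding FK_def by simp
      qed
    qed
    have P: "Pi0 r (g n -` FK k)" for n k
    proof -
      have "open (- FK k)" using FKc by auto
      then have "Sig1 (S n) (g n -` (- FK k))" using gm unfolding meas_def by blast
      then obtain E :: "nat \<Rightarrow> 'a set" where E: "g n -` (- FK k) = (\<Union>j. E j)" "\<forall>j. Pi0 (S n) (E j)"
        unfolding Sig1_def by (elim exE conjE)
      have "Sigma0 r (\<Union>j. E j)"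
        by (rule Sigma0_fromPi[of r "\<lambda>_. S n" E, OF w(1)]) (use gm E(2) in blast)
      then have "Sigma0 r (- (g n -` FK k))" using E(1) by (simp add: vimage_Compl)
      then show ?thesis unfolding Pi0_def .
    qed
    have "f -` U = (\<Union>k m. \<Inter>n. g (n + m) -` FK k)"
    proof (rule set_eqI, rule iffI)
      fix x assume x: "x \<in> f -` U"
      then have pos: "infdist (f x) (- U) > 0"
        using False U by (intro infdist_pos_not_in_closed) auto
      then obtain k :: nat where "inverse (real (Suc k)) < infdist (f x) (- U) / 2"
        using reals_Archimedean[of "infdist (f x) (- U) / 2"] by auto
      then have k: "2 * e k < infdist (f x) (- U)" unfolding e_def by (simp add: inverse_eq_divide add.commute)
      have "\<forall>\<^sub>F n in sequentially. dist (g n x) (f x) < e k"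
        using lim[rule_format, of x] epos[of k] unfolding tendsto_iff by blast
      then obtain m where m: "\<forall>n\<ge>m. dist (g n x) (f x) < e k" unfolding eventually_sequentially by blast
      have "g (n + m) x \<in> FK k" for n
      proof -
        have "infdist (f x) (- U) \<le> infdist (g (n + m) x) (- U) + dist (f x) (g (n + m) x)"
          by (rule infdist_triangle)
        moreover have "dist (f x) (g (n + m) x) < e k" using m by (simp add: dist_commute)
        ultimately show ?thesis unfolding FK_def using k by simp
      qed
      then show "x \<in> (\<Union>k m. \<Inter>n. g (n + m) -` FK k)" by blast
    next
      fix x assume "x \<in> (\<Union>k m. \<Inter>n. g (n + m) -` FK k)"
      then obtain k m where km: "\<forall>n. g (n + m) x \<in> FK k" by blast
      have "(\<lambda>n. g (n + m) x) \<longlonglongrightarrow> f x" using LIMSEQ_ignore_initial_segment lim by blast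
      then have "f x \<in> FK k"
        by (rule Lim_in_closed_set[OF FKc, rotated 2]) (use km in auto)
      then show "x \<in> f -` U" using FKU by blast
    qed
    moreover have "Sig1 r (\<Inter>n. g (n + m) -` FK k)" for k m
      using P w by (intro Sig1_Pi0 Pi0_INT) auto
    ultimately show ?thesis by (simp add: Sig1_UN)
  qed
qed

lemma baire_meas:
  fixes f :: "'a::metric_space \<Rightarrow> 'b::metric_space"
  assumes "baire_class r f"
  shows "meas r f"
  using assms
proof (induction rule: baire_class.induct)
  case (baire_one r f)
  have m: "minord r" using card1_minord baire_one by blast
  show ?case unfolding meas_def
  proof (intro allI impI)
    fix U :: "'b set" assume "open U"
    then obtain s where s: "Well_order s" "finite (Field s)" "card (Field s) = 2" "Sigma0 s (f -` U)"
      using baire_one by blast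
    have w: "Well_order r" "Field r \<noteq> {}" using baire_one by auto
    show "Sig1 r (f -` U)"
      using s(4)
    proof (cases rule: Sigma0.cases)
      case Sigma0_open
      from open_Union_closed[OF Sigma0_open(3)] obtain K :: "nat \<Rightarrow> 'a set"
        where K: "\<forall>k. closed (K k)" "f -` U = (\<Union>k. K k)" by (elim exE conjE)
      have "\<forall>k. Pi0 r (K k)" using K(1) Pi0_closedI[OF w] by blast
      then show ?thesis unfolding Sig1_def using K(2) by (intro exI[of _ K] conjI)
    next
      case (Sigma0_union F)
      have "closed (F n)" for n
      proof -
        obtain t where t: "t <o s" "Field t \<noteq> {}" "Sigma0 t (- F n)" using Sigma0_union(3) by blast
        have "minord t" using card2_lower_minord[OF s(2,3) t(1,2)] .
        then show ?thesis using Sigma0_minord_open t(3) by (simp add: closed_def)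
      qed
      then have "\<forall>k. Pi0 r (F k)" using Pi0_closedI[OF w] by blast
      then show ?thesis unfolding Sig1_def using Sigma0_union(1) by (intro exI[of _ F] conjI)
    qed
  qed
next
  case (baire_lim r g f)
  have "\<forall>n. \<exists>s. s <o r \<and> Field s \<noteq> {} \<and> meas s (g n)" using baire_lim by blast
  from choice[OF this] obtain S :: "nat \<Rightarrow> nat rel" where S: "\<forall>n. S n <o r \<and> Field (S n) \<noteq> {} \<and> meas (S n) (g n)" ..
  have "\<forall>x. (\<lambda>n. g n x) \<longlonglongrightarrow> f x" using baire_lim by blast
  then show ?case using meas_pointwise_limit[OF S] by blast
qed


section \<open>Approximation\<close>

lemma meas_partition:
  fixes f :: "'a::metric_space \<Rightarrow> 'b::metric_space"
  assumes sep: "separable_space TYPE('a)" and zd: "zero_dimensional TYPE('a)"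
    and sepb: "separable_space TYPE('b)"
    and w: "Well_order r" "Field r \<noteq> {}" and m: "meas r f" and eps: "\<epsilon> > 0"
  shows "\<exists>Q c. part r Q \<and> (\<forall>j. \<forall>x\<in>Q j. dist (f x) (c j) < \<epsilon>)"
proof -
  obtain D :: "'b set" where D: "countable D" "closure D = UNIV"
    using sepb unfolding separable_space_def by blast
  have Dne: "D \<noteq> {}" using D(2) by auto
  define d where "d = from_nat_into D"
  have rd: "range d = D" unfolding d_def using Dne D(1) by simp
  have cov: "\<exists>k. dist y (d k) < \<epsilon>" for y
  proof -
    have "y \<in> closure D" using D(2) by simp
    then obtain z where "z \<in> D" "dist z y < \<epsilon>" using closure_approachable[of y D] eps by blast
    then show ?thesis using rd by (metis dist_commute rangeE)
  qed
  have "\<forall>k. \<exists>E::nat \<Rightarrow> 'a set. f -` ball (d k) \<epsilon> = (\<Union>j. E j) \<and> (\<forall>j. Pi0 r (E j))"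
    using m unfolding meas_def Sig1_def by blast
  from choice[OF this] obtain E :: "nat \<Rightarrow> nat \<Rightarrow> 'a set"
    where E: "\<forall>k. f -` ball (d k) \<epsilon> = (\<Union>j. E k j) \<and> (\<forall>j. Pi0 r (E k j))" ..
  define E' where "E' m = (case prod_decode m of (k, j) \<Rightarrow> E k j)" for m
  define dk where "dk m = d (fst (prod_decode m))" for m
  have E'sub: "\<forall>x\<in>E' m. dist (f x) (dk m) < \<epsilon>" for m
  proof
    fix x assume x: "x \<in> E' m"
    obtain k j where kj: "prod_decode m = (k, j)" by (cases "prod_decode m")
    then have "x \<in> E k j" using x unfolding E'_def by simp
    then have "x \<in> f -` ball (d k) \<epsilon>" using E by blast
    then show "dist (f x) (dk m) < \<epsilon>" unfolding dk_def kj by (simp add: dist_commute)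
  qed
  have E'P: "Pi0 r (E' m)" for m
    unfolding E'_def using E by (simp split: prod.split)
  have E'U: "\<exists>m. x \<in> E' m" for x
  proof -
    obtain k where "dist (f x) (d k) < \<epsilon>" using cov by blast
    then have "x \<in> f -` ball (d k) \<epsilon>" by (simp add: dist_commute)
    then obtain j where "x \<in> E k j" using E by blast
    then have "x \<in> E' (prod_encode (k, j))" unfolding E'_def by simp
    then show ?thesis by blast
  qed
  define Zm where "Zm m = (\<Inter>i\<in>{0..<m}. - E' i)" for m
  have "Sigma0 r (Zm m)" for m
    unfolding Zm_def using E'P unfolding Pi0_def by (intro Sigma0_INT_finite w) auto
  then have "\<forall>m. \<exists>V::nat \<Rightarrow> 'a set. disjoint_family V \<and> (\<forall>n. Pi0 r (V n)) \<and> Zm m = (\<Union>n. V n)"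
    using Sigma0_disjoint_Pi0[OF sep zd] by blast
  from choice[OF this] obtain V :: "nat \<Rightarrow> nat \<Rightarrow> 'a set"
    where V: "\<forall>m. disjoint_family (V m) \<and> (\<forall>n. Pi0 r (V m n)) \<and> Zm m = (\<Union>n. V m n)" ..
  define R where "R p = E' (fst p) \<inter> V (fst p) (snd p)" for p
  have R1: "\<forall>p q. p \<noteq> q \<longrightarrow> R p \<inter> R q = {}"
  proof (intro allI impI)
    fix p q :: "nat \<times> nat" assume pq: "p \<noteq> q"
    have RZ: "R p \<subseteq> E' (fst p) \<inter> Zm (fst p)" for p unfolding R_def using V by blast
    show "R p \<inter> R q = {}"
    proof (cases "fst p = fst q")
      case True
      then have "snd p \<noteq> snd q" using pq by (cases p, cases q) auto
      then have "V (fst p) (snd p) \<inter> V (fst p) (snd q) = {}"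
        using V unfolding disjoint_family_on_def by blast
      then show ?thesis unfolding R_def using True by auto
    next
      case False
      then consider "fst p < fst q" | "fst q < fst p" by linarith
      then show ?thesis
      proof cases
        case 1
        then have "Zm (fst q) \<subseteq> - E' (fst p)" unfolding Zm_def by auto
        then show ?thesis using RZ[of p] RZ[of q] by blast
      next
        case 2
        then have "Zm (fst p) \<subseteq> - E' (fst q)" unfolding Zm_def by auto
        then show ?thesis using RZ[of p] RZ[of q] by blast
      qed
    qed
  qed
  have R2: "\<forall>p. Pi0 r (R p)" unfolding R_def using E'P V by (auto intro: Pi0_Int)
  have R3: "(\<Union>p. R p) = UNIV"
  proof -
    have "x \<in> (\<Union>p. R p)" for x
    proof -
      define m where "m = (LEAST m. x \<in> E' m)"
      have xm: "x \<in> E' m" unfolding m_def using E'U by (rule LeastI_ex)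
      have "x \<notin> E' i" if "i < m" for i using not_less_Least[OF that[unfolded m_def]] .
      then have "x \<in> Zm m" unfolding Zm_def by auto
      then obtain n where "x \<in> V m n" using V by blast
      then have "x \<in> R (m, n)" unfolding R_def using xm by simp
      then show ?thesis by blast
    qed
    then show ?thesis by blast
  qed
  have P: "part r (\<lambda>n. R (prod_decode n))" using part_pairs[OF R1 R2 R3] .
  have Hc: "\<forall>j. \<forall>x\<in>R (prod_decode j). dist (f x) (dk (fst (prod_decode j))) < \<epsilon>"
    unfolding R_def using E'sub by blast
  show ?thesis
    by (rule exI[of _ "\<lambda>n. R (prod_decode n)"], rule exI[of _ "\<lambda>j. dk (fst (prod_decode j))"], rule conjI[OF P Hc])
qed

lemma part_choose:
  assumes "part r Q" "\<forall>j. \<forall>x\<in>Q j. dist (f x) (c j) < \<epsilon>"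
  defines "h \<equiv> \<lambda>x. c (SOME j. x \<in> Q j)"
  shows "\<forall>j. \<forall>x\<in>Q j. h x = c j" "\<forall>x. dist (h x) (f x) < \<epsilon>"
proof -
  have Qd: "disjoint_family Q" and QU: "(\<Union>n. Q n) = UNIV" using assms(1) unfolding part_def by auto
  show hQ: "\<forall>j. \<forall>x\<in>Q j. h x = c j"
  proof (intro allI ballI)
    fix j x assume x: "x \<in> Q j"
    then have "x \<in> Q (SOME j. x \<in> Q j)" by (rule someI)
    then have "(SOME j. x \<in> Q j) = j" using x Qd unfolding disjoint_family_on_def by blast
    then show "h x = c j" unfolding h_def by simp
  qed
  show "\<forall>x. dist (h x) (f x) < \<epsilon>"
  proof
    fix x
    obtain j where "x \<in> Q j" using QU by blast
    then show "dist (h x) (f x) < \<epsilon>" using hQ assms(2) by (simp add: dist_commute)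
  qed
qed

lemma meas_approx_const:
  fixes f :: "'a::metric_space \<Rightarrow> 'b::metric_space"
  assumes sep: "separable_space TYPE('a)" and zd: "zero_dimensional TYPE('a)"
    and sepb: "separable_space TYPE('b)"
    and w: "Well_order r" "Field r \<noteq> {}" and m: "meas r f"
  shows "approx_by_local r constant_fun f"
proof -
  have "\<forall>n::nat. \<exists>h. (\<forall>x. dist (h x) (f x) < 1 / (real n + 1)) \<and>
      (\<exists>C N. Pi0_partition r C N \<and> locally_on_partition constant_fun C N h)"
  proof
    fix n :: nat
    have "1 / (real n + 1) > 0" by simp
    from meas_partition[OF sep zd sepb w m this] obtain Q c where
      Q: "part r Q" "\<forall>j. \<forall>x\<in>Q j. dist (f x) (c j) < 1 / (real n + 1)" by (elim exE conjE)
    define h where "h = (\<lambda>x. c (SOME j. x \<in> Q j))"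
    have hQ: "\<forall>j. \<forall>x\<in>Q j. h x = c j" and hd: "\<forall>x. dist (h x) (f x) < 1 / (real n + 1)"
      using part_choose[OF Q] unfolding h_def by auto
    have "\<forall>j. constant_fun ((\<lambda>j _. c j) j)" unfolding constant_fun_def by blast
    have hQ': "\<forall>n. \<forall>x\<in>Q n. h x = (\<lambda>j _. c j) n x" using hQ by simp
    have "\<exists>C N. Pi0_partition r C N \<and> locally_on_partition constant_fun C N h"
      by (rule part_to_partition[where P=constant_fun and G="\<lambda>j _. c j" and h=h, OF Q(1) \<open>\<forall>j. constant_fun ((\<lambda>j _. c j) j)\<close> hQ'])
    then show "\<exists>h. (\<forall>x. dist (h x) (f x) < 1 / (real n + 1)) \<and>
      (\<exists>C N. Pi0_partition r C N \<and> locally_on_partition constant_fun C N h)" using hd by blast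
  qed
  from choice[OF this] obtain H :: "nat \<Rightarrow> 'a \<Rightarrow> 'b" where
    H: "\<forall>n. (\<forall>x. dist (H n x) (f x) < 1 / (real n + 1)) \<and>
      (\<exists>C N. Pi0_partition r C N \<and> locally_on_partition constant_fun C N (H n))" ..
  have "uniform_limit UNIV H f sequentially"
  proof (rule uniform_limitI)
    fix e :: real assume e: "e > 0"
    obtain N0 :: nat where N0: "inverse (real (Suc N0)) < e" using reals_Archimedean[OF e] by blast
    show "\<forall>\<^sub>F n in sequentially. \<forall>x\<in>UNIV. dist (H n x) (f x) < e"
      unfolding eventually_sequentially
    proof (intro exI[of _ N0] allI impI ballI)
      fix n x assume n: "N0 \<le> n"
      have "1 / (real n + 1) \<le> 1 / (real N0 + 1)" using n by (intro divide_left_mono) auto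
      also have "\<dots> < e" using N0 by (simp add: inverse_eq_divide add.commute)
      finally show "dist (H n x) (f x) < e" using H by (meson less_trans)
    qed
  qed
  then show ?thesis unfolding approx_by_local_def using H by blast
qed

lemma approx_mono:
  assumes "approx_by_local r P f" "\<And>g. P g \<Longrightarrow> P' g"
  shows "approx_by_local r P' f"
  using assms unfolding approx_by_local_def locally_on_partition_def by meson

lemma const_lipschitz: "constant_fun g \<Longrightarrow> lipschitz_fun g"
  unfolding constant_fun_def lipschitz_fun_def by (auto intro!: exI[of _ 0] lipschitz_onI)

lemma lipschitz_cont: "lipschitz_fun g \<Longrightarrow> continuous_fun g"
  unfolding lipschitz_fun_def continuous_fun_def using lipschitz_on_continuous_on by blast

lemma approx_cont_meas:
  fixes f :: "'a::metric_space \<Rightarrow> 'b::metric_space"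
  assumes a: "approx_by_local r continuous_fun f" and w: "Well_order r" "Field r \<noteq> {}"
  shows "meas r f"
proof -
  obtain h where ul: "uniform_limit UNIV h f sequentially"
    and hp: "\<forall>n. \<exists>C N. Pi0_partition r C N \<and> locally_on_partition continuous_fun C N (h n)"
    using a unfolding approx_by_local_def by blast
  have "\<forall>n. meas r (h n)" using hp partition_cont_meas by blast
  then show ?thesis using meas_uniform_limit[OF _ ul w] by blast
qed


section \<open>Pointwise approximation from below\<close>

lemma meas_lim:
  fixes f :: "'a::metric_space \<Rightarrow> 'b::metric_space"
  assumes sep: "separable_space TYPE('a)" and zd: "zero_dimensional TYPE('a)"
    and sepb: "separable_space TYPE('b)"
    and w: "Well_order r" "Field r \<noteq> {}" and nm: "\<not> minord r" and m: "meas r f"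
  shows "\<exists>g S. (\<forall>n::nat. S n <o r \<and> Field (S n) \<noteq> {} \<and> meas (S n) (g n)) \<and> (\<forall>x. (\<lambda>n. g n x) \<longlonglongrightarrow> f x)"
proof -
  define e where "e k = 1 / (real k + 1)" for k :: nat
  have epos: "e k > 0" for k unfolding e_def by simp
  have emono: "e k' \<le> e k" if "k \<le> k'" for k k' unfolding e_def using that by (intro divide_left_mono) auto
  have "\<forall>k. \<exists>Qc. part r (fst Qc) \<and> (\<forall>j. \<forall>x\<in>fst Qc j. dist (f x) (snd Qc j) < e k)"
  proof
    fix k
    from meas_partition[OF sep zd sepb w m epos[of k]] obtain Q c where
      "part r Q" "\<forall>j. \<forall>x\<in>Q j. dist (f x) (c j) < e k" by (elim exE conjE)
    then show "\<exists>Qc. part r (fst Qc) \<and> (\<forall>j. \<forall>x\<in>fst Qc j. dist (f x) (snd Qc j) < e k)"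
      by (intro exI[of _ "(Q, c)"]) simp
  qed
  from choice[OF this] obtain PC :: "nat \<Rightarrow> (nat \<Rightarrow> 'a set) \<times> (nat \<Rightarrow> 'b)" where
    PC: "\<forall>k. part r (fst (PC k)) \<and> (\<forall>j. \<forall>x\<in>fst (PC k) j. dist (f x) (snd (PC k) j) < e k)" ..
  define P where "P k = fst (PC k)" for k
  define c where "c k = snd (PC k)" for k
  have Pp: "part r (P k)" for k using PC unfolding P_def by blast
  have Pc: "\<forall>x\<in>P k j. dist (f x) (c k j) < e k" for k j using PC unfolding P_def c_def by blast
  have PD: "disjoint_family (P k)" and PU: "(\<Union>j. P k j) = UNIV" and PP: "Pi0 r (P k j)" for k j
    using Pp unfolding part_def by auto
  have "\<forall>p::nat\<times>nat. \<exists>FS::(nat \<Rightarrow> 'a set) \<times> (nat \<Rightarrow> nat rel). - P (fst p) (snd p) = (\<Union>i. fst FS i) \<and>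
     (\<forall>i. snd FS i <o r \<and> Field (snd FS i) \<noteq> {} \<and> Pi0 (snd FS i) (fst FS i))"
  proof
    fix p :: "nat \<times> nat"
    have "Sigma0 r (- P (fst p) (snd p))" using PP unfolding Pi0_def by blast
    from iffD1[OF Sigma0_char[OF w(1) nm] this] obtain F S where
      "- P (fst p) (snd p) = (\<Union>i. F i)" "\<forall>i::nat. S i <o r \<and> Field (S i) \<noteq> {} \<and> Pi0 (S i) (F i)"
      by (elim exE conjE)
    then show "\<exists>FS::(nat \<Rightarrow> 'a set) \<times> (nat \<Rightarrow> nat rel). - P (fst p) (snd p) = (\<Union>i. fst FS i) \<and>
     (\<forall>i. snd FS i <o r \<and> Field (snd FS i) \<noteq> {} \<and> Pi0 (snd FS i) (fst FS i))"
      by (intro exI[of _ "(F, S)"]) simp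
  qed
  from choice[OF this] obtain FS :: "nat \<times> nat \<Rightarrow> (nat \<Rightarrow> 'a set) \<times> (nat \<Rightarrow> nat rel)" where
    FS: "\<forall>p. - P (fst p) (snd p) = (\<Union>i. fst (FS p) i) \<and>
     (\<forall>i. snd (FS p) i <o r \<and> Field (snd (FS p) i) \<noteq> {} \<and> Pi0 (snd (FS p) i) (fst (FS p) i))" ..
  define Z where "Z k j i = - fst (FS (k, j)) i" for k j i
  define S where "S k j i = snd (FS (k, j)) i" for k j i
  have ZS: "Sigma0 (S k j i) (Z k j i)" and Sl: "S k j i <o r" "Field (S k j i) \<noteq> {}" for k j i
    using FS[rule_format, of "(k, j)"] unfolding Z_def S_def Pi0_def by auto
  have PZ: "P k j = (\<Inter>i. Z k j i)" for k j
  proof -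
    have "- P k j = (\<Union>i. fst (FS (k, j)) i)" using FS[rule_format, of "(k, j)"] by simp
    then have "P k j = - (\<Union>i. fst (FS (k, j)) i)" by (metis double_compl)
    then show ?thesis unfolding Z_def by simp
  qed
  define Ob where "Ob k j n = (\<Inter>i\<in>{..n}. Z k j i)" for k j n :: nat
  define sel where "sel k n x = (if \<exists>j\<le>n. x \<in> Ob k j n then (LEAST j. j \<le> n \<and> x \<in> Ob k j n) else 0)" for k n :: nat and x
  define cons where "cons n x k = (\<forall>a\<le>k. \<forall>b\<le>k. dist (c a (sel a n x)) (c b (sel b n x)) \<le> e a + e b)" for n :: nat and x and k :: nat
  define M where "M n x = Max {k. k \<le> n \<and> cons n x k}" for n x
  define g where "g n x = c (M n x) (sel (M n x) n x)" for n x
  have Mfin: "finite {k. k \<le> n \<and> cons n x k}" for n x by simp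
  have cons0: "cons n x 0" for n x unfolding cons_def using epos by (simp add: less_imp_le)
  have Mne: "{k. k \<le> n \<and> cons n x k} \<noteq> {}" for n x using cons0 by blast
  have Mle: "M n x \<le> n" and Mcons: "cons n x (M n x)" for n x
    using Max_in[OF Mfin Mne, of n x] unfolding M_def by auto
  have Mge: "k \<le> M n x" if "k \<le> n" "cons n x k" for n x k
    unfolding M_def using that by (intro Max_ge[OF Mfin]) auto

  have conv: "(\<lambda>n. g n x) \<longlonglongrightarrow> f x" for x
  proof -
    define J where "J k = (SOME j. x \<in> P k j)" for k
    have xJ: "x \<in> P k (J k)" for k
    proof -
      have "\<exists>j. x \<in> P k j" using PU[of k] by blast
      then show ?thesis unfolding J_def by (rule someI_ex)
    qed
    have notJ: "x \<notin> P k j" if "j \<noteq> J k" for k j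
      using xJ[of k] PD[of k] that unfolding disjoint_family_on_def by blast
    have evsel: "\<forall>\<^sub>F n in sequentially. sel k n x = J k" for k
    proof -
      have "\<forall>\<^sub>F n in sequentially. x \<notin> Ob k j n" if "j < J k" for j
      proof -
        have "x \<notin> P k j" using notJ that by simp
        then obtain i where i: "x \<notin> Z k j i" using PZ by blast
        show ?thesis unfolding eventually_sequentially Ob_def
          by (intro exI[of _ i]) (use i in auto)
      qed
      then have ev1: "\<forall>\<^sub>F n in sequentially. \<forall>j\<in>{..<J k}. x \<notin> Ob k j n"
        by (intro eventually_ball_finite) auto
      have ev2: "\<forall>\<^sub>F n in sequentially. J k \<le> n" unfolding eventually_sequentially by blast
      have inJ: "x \<in> Ob k (J k) n" for n using xJ PZ unfolding Ob_def by blast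
      show ?thesis
      proof (rule eventually_mono[OF eventually_conj[OF ev1 ev2]])
        fix n assume n: "(\<forall>j\<in>{..<J k}. x \<notin> Ob k j n) \<and> J k \<le> n"
        have ex: "\<exists>j\<le>n. x \<in> Ob k j n" using n inJ by blast
        have "(LEAST j. j \<le> n \<and> x \<in> Ob k j n) = J k"
        proof (rule Least_equality)
          show "J k \<le> n \<and> x \<in> Ob k (J k) n" using n inJ by blast
          fix y assume "y \<le> n \<and> x \<in> Ob k y n"
          then show "J k \<le> y" using n by (meson lessThan_iff not_le_imp_less)
        qed
        then show "sel k n x = J k" unfolding sel_def using ex by simp
      qed
    qed
    show ?thesis
      unfolding tendsto_iff
    proof (intro allI impI)
      fix \<epsilon> :: real assume eps: "\<epsilon> > 0"
      obtain m0 :: nat where m0: "inverse (real (Suc m0)) < \<epsilon> / 3"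
        using reals_Archimedean[of "\<epsilon> / 3"] eps by auto
      then have em0: "3 * e m0 < \<epsilon>" unfolding e_def by (simp add: inverse_eq_divide add.commute)
      have ev1: "\<forall>\<^sub>F n in sequentially. \<forall>k\<in>{..m0}. sel k n x = J k"
        by (rule eventually_ball_finite) (auto simp: evsel)
      have ev2: "\<forall>\<^sub>F n in sequentially. m0 \<le> n" unfolding eventually_sequentially by blast
      have ev: "\<forall>\<^sub>F n in sequentially. (\<forall>k\<in>{..m0}. sel k n x = J k) \<and> m0 \<le> n"
        using eventually_conj[OF ev1 ev2] .
      show "\<forall>\<^sub>F n in sequentially. dist (g n x) (f x) < \<epsilon>"
      proof (rule eventually_mono[OF ev])
        fix n assume n: "(\<forall>k\<in>{..m0}. sel k n x = J k) \<and> m0 \<le> n"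
        have "cons n x m0" unfolding cons_def
        proof (intro allI impI)
          fix a b assume ab: "a \<le> m0" "b \<le> m0"
          have "dist (c a (sel a n x)) (c b (sel b n x)) \<le> dist (c a (sel a n x)) (f x) + dist (f x) (c b (sel b n x))"
            by (rule dist_triangle)
          also have "\<dots> < e a + e b"
            using Pc[of a "J a"] Pc[of b "J b"] xJ[of a] xJ[of b] n ab
            by (simp add: dist_commute add_strict_mono)
          finally show "dist (c a (sel a n x)) (c b (sel b n x)) \<le> e a + e b" by simp
        qed
        then have mM: "m0 \<le> M n x" using Mge n by blast
        have "dist (g n x) (c m0 (sel m0 n x)) \<le> e (M n x) + e m0"
          using Mcons[of n x] mM unfolding cons_def g_def by blast
        also have "\<dots> \<le> 2 * e m0" using emono[OF mM] by simp
        finally have d1: "dist (g n x) (c m0 (J m0)) \<le> 2 * e m0" using n by simp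
        have d2: "dist (c m0 (J m0)) (f x) < e m0" using Pc[of m0 "J m0"] xJ[of m0] by (simp add: dist_commute)
        have "dist (g n x) (f x) \<le> dist (g n x) (c m0 (J m0)) + dist (c m0 (J m0)) (f x)" by (rule dist_triangle)
        also have "\<dots> < 3 * e m0" using d1 d2 by simp
        finally show "dist (g n x) (f x) < \<epsilon>" using em0 by simp
      qed
    qed
  qed

  have gsame: "g n x = g n y" if same: "\<forall>k\<le>n. \<forall>j\<le>n. \<forall>i\<le>n. (x \<in> Z k j i \<longleftrightarrow> y \<in> Z k j i)" for n x y
  proof -
    have Obeq: "x \<in> Ob k j n \<longleftrightarrow> y \<in> Ob k j n" if "k \<le> n" "j \<le> n" for k j
      unfolding Ob_def using same that by auto
    have seleq: "sel k n x = sel k n y" if "k \<le> n" for k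
    proof -
      have e1: "(\<lambda>j. j \<le> n \<and> x \<in> Ob k j n) = (\<lambda>j. j \<le> n \<and> y \<in> Ob k j n)"
        using Obeq[OF that] by auto
      have e2: "(\<exists>j\<le>n. x \<in> Ob k j n) = (\<exists>j\<le>n. y \<in> Ob k j n)" using Obeq[OF that] by auto
      show ?thesis unfolding sel_def e2 by (simp only: e1)
    qed
    have conseq: "cons n x k = cons n y k" if "k \<le> n" for k
    proof -
      have sa: "sel a n x = sel a n y" if "a \<le> k" for a using seleq \<open>k \<le> n\<close> that by simp
      show ?thesis unfolding cons_def by (auto simp: sa)
    qed
    have "{k. k \<le> n \<and> cons n x k} = {k. k \<le> n \<and> cons n y k}" using conseq by auto
    then have "M n x = M n y" unfolding M_def by simp
    then show ?thesis unfolding g_def using seleq[OF Mle[of n x]] by simp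
  qed

  have "\<exists>t. t <o r \<and> Field t \<noteq> {} \<and> meas t (g n)" for n
  proof -
    define I where "I = {..n} \<times> {..n} \<times> {..n}"
    have fI: "finite I" and neI: "I \<noteq> {}" unfolding I_def by auto
    have "\<forall>p\<in>I. (case p of (k, j, i) \<Rightarrow> S k j i) <o r \<and> Field (case p of (k, j, i) \<Rightarrow> S k j i) \<noteq> {}"
      using Sl by (auto split: prod.split)
    from max_ord[OF fI neI this] obtain t :: "nat rel" where
      t: "t <o r" "Field t \<noteq> {}" "\<forall>p\<in>I. (case p of (k, j, i) \<Rightarrow> S k j i) \<le>o t"
      by (elim exE conjE)
    have wt: "Well_order t" using ordLess_wo1[OF t(1)] .
    have ZI: "\<forall>p\<in>I. Sigma0 t (case p of (k, j, i) \<Rightarrow> Z k j i)"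
    proof
      fix p assume p: "p \<in> I"
      obtain k j i where kji: "p = (k, j, i)" by (cases p)
      have "S k j i \<le>o t" using t(3) p kji by auto
      then have "Sigma0 t (Z k j i)" by (rule Sigma0_mono[OF ZS])
      then show "Sigma0 t (case p of (k, j, i) \<Rightarrow> Z k j i)" using kji by simp
    qed
    from refine[OF sep zd fI wt t(2) ZI] obtain Q where
      Q: "part t Q" "\<forall>l. \<forall>p\<in>I. Q l \<subseteq> (case p of (k, j, i) \<Rightarrow> Z k j i) \<or> Q l \<inter> (case p of (k, j, i) \<Rightarrow> Z k j i) = {}"
      by (elim exE conjE)
    have "\<forall>l. \<forall>x\<in>Q l. g n x = g n (SOME y. y \<in> Q l)"
    proof (intro allI ballI)
      fix l x assume x: "x \<in> Q l"
      have y: "(SOME y. y \<in> Q l) \<in> Q l" using x by (rule someI)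
      show "g n x = g n (SOME y. y \<in> Q l)"
      proof (rule gsame, intro allI impI)
        fix k j i assume "k \<le> n" "j \<le> n" "i \<le> n"
        then have "(k, j, i) \<in> I" unfolding I_def by auto
        then have "Q l \<subseteq> Z k j i \<or> Q l \<inter> Z k j i = {}" using Q(2) by fastforce
        then show "x \<in> Z k j i \<longleftrightarrow> (SOME y. y \<in> Q l) \<in> Z k j i" using x y by blast
      qed
    qed
    then have "meas t (g n)" by (rule part_const_meas[OF Q(1)])
    then show ?thesis using t by blast
  qed
  then have "\<forall>n. \<exists>t. t <o r \<and> Field t \<noteq> {} \<and> meas t (g n)" by blast
  from choice[OF this] obtain T :: "nat \<Rightarrow> nat rel" where "\<forall>n. T n <o r \<and> Field (T n) \<noteq> {} \<and> meas (T n) (g n)" ..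
  then show ?thesis using conv by blast
qed

lemma meas_baire:
  fixes f :: "'a::metric_space \<Rightarrow> 'b::metric_space"
  assumes sep: "separable_space TYPE('a)" and zd: "zero_dimensional TYPE('a)"
    and sepb: "separable_space TYPE('b)"
  shows "Well_order r \<Longrightarrow> Field r \<noteq> {} \<Longrightarrow> meas r f \<Longrightarrow> baire_class r f"
proof -
  have "\<forall>f::'a \<Rightarrow> 'b. Well_order r \<longrightarrow> Field r \<noteq> {} \<longrightarrow> meas r f \<longrightarrow> baire_class r f"
  proof (rule wf_induct[OF wf_ordLess, of "\<lambda>r. \<forall>f::'a \<Rightarrow> 'b. Well_order r \<longrightarrow> Field r \<noteq> {} \<longrightarrow> meas r f \<longrightarrow> baire_class r f"])
    fix r :: "nat rel"
    assume IH: "\<forall>y. (y, r) \<in> ordLess \<longrightarrow> (\<forall>f::'a \<Rightarrow> 'b. Well_order y \<longrightarrow> Field y \<noteq> {} \<longrightarrow> meas y f \<longrightarrow> baire_class y f)"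
    show "\<forall>f::'a \<Rightarrow> 'b. Well_order r \<longrightarrow> Field r \<noteq> {} \<longrightarrow> meas r f \<longrightarrow> baire_class r f"
    proof (intro allI impI)
      fix f :: "'a \<Rightarrow> 'b" assume w: "Well_order r" "Field r \<noteq> {}" and m: "meas r f"
      show "baire_class r f"
      proof (cases "minord r")
        case True
        have c1: "finite (Field r)" "card (Field r) = 1" using minord_card1[OF w True] by auto
        show ?thesis
        proof (rule baire_one[OF w(1) c1], intro allI impI)
          fix U :: "'b set" assume U: "open U"
          have "Sig1 r (f -` U)" using m U unfolding meas_def by blast
          then obtain F :: "nat \<Rightarrow> 'a set" where F: "f -` U = (\<Union>n. F n)" "\<forall>n. Pi0 r (F n)"
            unfolding Sig1_def by (elim exE conjE)
          have "\<forall>n. natLeq_on 1 <o natLeq_on 2 \<and> Field (natLeq_on 1) \<noteq> {} \<and> Pi0 (natLeq_on 1) (F n)"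
            using natLeq_on_1_less F(2) Pi0_minord_closed[OF True] Pi0_closedI[OF natLeq_on_Well_order]
            by blast
          then have "Sigma0 (natLeq_on 2) (\<Union>n. F n)"
            by (rule Sigma0_fromPi[of "natLeq_on 2" "\<lambda>_. natLeq_on 1" F, OF natLeq_on_2(1)])
          then show "\<exists>s. Well_order s \<and> finite (Field s) \<and> card (Field s) = 2 \<and> Sigma0 s (f -` U)"
            using natLeq_on_2 F(1) by (intro exI[of _ "natLeq_on 2"]) simp
        qed
      next
        case False
        from meas_lim[OF sep zd sepb w False m] obtain g S where
          gS: "\<forall>n::nat. S n <o r \<and> Field (S n) \<noteq> {} \<and> meas (S n) (g n)" "\<forall>x. (\<lambda>n. g n x) \<longlonglongrightarrow> f x"
          by (elim exE conjE)
        have "\<forall>n. \<exists>s. s <o r \<and> Field s \<noteq> {} \<and> baire_class s (g n)"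
        proof
          fix n
          have "baire_class (S n) (g n)" using IH gS(1) ordLess_wo1 by blast
          then show "\<exists>s. s <o r \<and> Field s \<noteq> {} \<and> baire_class s (g n)" using gS(1) by blast
        qed
        then show ?thesis using baire_lim[OF w(1) _ gS(2)] by blast
      qed
    qed
  qed
  then show "Well_order r \<Longrightarrow> Field r \<noteq> {} \<Longrightarrow> meas r f \<Longrightarrow> baire_class r f" by blast
qed

theorem mainTheorem13:
  fixes f :: "'a::metric_space \<Rightarrow> 'b::metric_space"
    and r :: "nat rel"
  assumes "separable_space TYPE('a)" and "separable_space TYPE('b)"
    and "zero_dimensional TYPE('a)"
    and "Well_order r" and "Field r \<noteq> {}"
  shows "(baire_class r f \<longleftrightarrow> approx_by_local r constant_fun f)
       \<and> (baire_class r f \<longleftrightarrow> approx_by_local r lipschitz_fun f)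
       \<and> (baire_class r f \<longleftrightarrow> approx_by_local r continuous_fun f)"
proof -
  have BM: "baire_class r f \<longleftrightarrow> meas r f"
    using baire_meas meas_baire[OF assms(1,3,2) assms(4,5)] by blast
  have MC: "meas r f \<Longrightarrow> approx_by_local r constant_fun f"
    using meas_approx_const[OF assms(1,3,2) assms(4,5)] by blast
  have CL: "approx_by_local r constant_fun f \<Longrightarrow> approx_by_local r lipschitz_fun f"
    using approx_mono const_lipschitz by blast
  have LC: "approx_by_local r lipschitz_fun f \<Longrightarrow> approx_by_local r continuous_fun f"
    using approx_mono lipschitz_cont by blast
  have CM: "approx_by_local r continuous_fun f \<Longrightarrow> meas r f"
    using approx_cont_meas assms(4,5) by blast
  show ?thesis using BM MC CL LC CM by blast
qed

end
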